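(* Let $k\ge 0$ and let $a_i\ge b_i\ge 0$ be integers for $i=0,1,\dots,k$. Suppose that, at some moment of a game on $K_{\mathbb N}$ in which in each round Builder selects an unselected edge and Painter colours it red or blue, the coloured graph $G$ of already coloured edges contains vertex-disjoint paths $P(a_0,b_0),P(a_1,b_1),\dots,P(a_k,b_k)$. Then Builder can force, within at most $2k$ further rounds, either a red $C_3$ or a blue path on $a_0+\sum_{i=1}^k b_i$ vertices.
   Context: For integers $s,t>0$, $P(s,t)$ denotes the coloured path on $s+t$ vertices obtained from two vertex-disjoint blue paths on $s$ and $t$ vertices by joining an end of one to an end of the other by a red edge; $P(s,0)$ denotes a blue path on $s$ vertices. "Builder can force within $r$ rounds" means Builder has a strategy for selecting edges such that, whatever Painter does, after at most $r$ more rounds the coloured graph contains the stated structure. *)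

theory Defs
  imports Main
begin

datatype colour = Red | Blue

text \<open>A coloured graph on vertex set N: a partial map from edges (2-element
  vertex sets) to colours; None means the edge is not yet selected/coloured.\<close>
type_synonym cgraph = "nat set \<Rightarrow> colour option"

definition valid_state :: "cgraph \<Rightarrow> bool" where
  "valid_state G \<longleftrightarrow> finite (dom G) \<and> (\<forall>e\<in>dom G. \<exists>u v. u \<noteq> v \<and> e = {u, v})"

text \<open>The vertex list vs spans a copy of P(s,t) in G: a blue path on the
  first s vertices, a red edge between positions s-1 and s, then a blue path
  on the last t vertices; for t = 0 it is a blue path on s vertices.\<close>
definition has_P :: "cgraph \<Rightarrow> nat \<Rightarrow> nat \<Rightarrow> nat list \<Rightarrow> bool" where
  "has_P G s t vs \<longleftrightarrow> distinct vs \<and> length vs = s + t \<and>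
     (\<forall>j. Suc j < s + t \<longrightarrow>
        G {vs ! j, vs ! Suc j} = Some (if Suc j = s then Red else Blue))"

definition has_blue_path :: "cgraph \<Rightarrow> nat \<Rightarrow> bool" where
  "has_blue_path G n \<longleftrightarrow> (\<exists>vs. distinct vs \<and> length vs = n \<and>
     (\<forall>j. Suc j < n \<longrightarrow> G {vs ! j, vs ! Suc j} = Some Blue))"

definition has_red_C3 :: "cgraph \<Rightarrow> bool" where
  "has_red_C3 G \<longleftrightarrow> (\<exists>x y z. x \<noteq> y \<and> y \<noteq> z \<and> x \<noteq> z \<and>
     G {x, y} = Some Red \<and> G {y, z} = Some Red \<and> G {x, z} = Some Red)"

primrec forces :: "nat \<Rightarrow> cgraph \<Rightarrow> (cgraph \<Rightarrow> bool) \<Rightarrow> bool" where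
  "forces 0 G Q \<longleftrightarrow> Q G"
| "forces (Suc r) G Q \<longleftrightarrow> Q G \<or>
     (\<exists>u v. u \<noteq> v \<and> G {u, v} = None \<and>
        (\<forall>c. forces r (G({u, v} := Some c)) Q))"

end

theory Submission
  imports Defs
begin

definition bp :: "cgraph \<Rightarrow> nat list \<Rightarrow> bool" where
  "bp G xs \<longleftrightarrow> (\<forall>j. Suc j < length xs \<longrightarrow> G {xs ! j, xs ! Suc j} = Some Blue)"

lemma bp_take: "bp G xs \<Longrightarrow> bp G (take n xs)"
  unfolding bp_def by auto

lemma bp_drop: "bp G xs \<Longrightarrow> bp G (drop n xs)"
  unfolding bp_def by (auto simp: add.commute)

lemma bp_rev: "bp G xs \<Longrightarrow> bp G (rev xs)"
  unfolding bp_def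
proof (intro allI impI)
  fix j assume h: "\<forall>j. Suc j < length xs \<longrightarrow> G {xs ! j, xs ! Suc j} = Some Blue"
    and j: "Suc j < length (rev xs)"
  define i where "i = length xs - Suc (Suc j)"
  have "Suc i < length xs" using j by (simp add: i_def)
  then have "G {xs ! i, xs ! Suc i} = Some Blue" using h by blast
  moreover have "rev xs ! j = xs ! Suc i" "rev xs ! Suc j = xs ! i"
    using j by (auto simp: rev_nth i_def Suc_diff_Suc)
  ultimately show "G {rev xs ! j, rev xs ! Suc j} = Some Blue"
    by (simp add: insert_commute)
qed

lemma bp_mono: "bp G xs \<Longrightarrow> G \<subseteq>\<^sub>m H \<Longrightarrow> bp H xs"
  unfolding bp_def map_le_def by (metis domIff option.distinct(1))

lemma bp_append:
  assumes "bp G xs" "bp G ys" "xs \<noteq> []" "ys \<noteq> []" "G {last xs, hd ys} = Some Blue"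
  shows "bp G (xs @ ys)"
  unfolding bp_def
proof (intro allI impI)
  fix j assume j: "Suc j < length (xs @ ys)"
  show "G {(xs @ ys) ! j, (xs @ ys) ! Suc j} = Some Blue"
  proof (cases "Suc j < length xs")
    case True
    then show ?thesis using assms(1) unfolding bp_def by (simp add: nth_append)
  next
    case False
    show ?thesis
    proof (cases "j < length xs")
      case True
      with False have "j = length xs - 1" by simp
      then have "(xs @ ys) ! j = last xs" "(xs @ ys) ! Suc j = hd ys"
        using assms(3,4) True by (auto simp: nth_append last_conv_nth hd_conv_nth)
      then show ?thesis using assms(5) by simp
    next
      case F2: False
      define i where "i = j - length xs"
      have "Suc i < length ys" using j F2 by (simp add: i_def)
      moreover have "(xs @ ys) ! j = ys ! i" "(xs @ ys) ! Suc j = ys ! Suc i"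
        using F2 by (auto simp: nth_append i_def Suc_diff_le)
      ultimately show ?thesis using assms(2) unfolding bp_def by simp
    qed
  qed
qed

lemma hasP_mono: "has_P G s t vs \<Longrightarrow> G \<subseteq>\<^sub>m H \<Longrightarrow> has_P H s t vs"
  unfolding has_P_def map_le_def by (metis domIff option.distinct(1))

lemma forces_triv: "Q G \<Longrightarrow> forces r G Q"
  by (cases r) auto

lemma forces_mono: "forces r G Q \<Longrightarrow> forces (r + d) G Q"
proof (induction r arbitrary: G)
  case 0
  then show ?case by (simp add: forces_triv)
next
  case (Suc r)
  show ?case
  proof (cases "Q G")
    case True then show ?thesis by (simp add: forces_triv)
  next
    case False
    then obtain u v where "u \<noteq> v" "G {u, v} = None" "\<forall>c. forces r (G({u, v} := Some c)) Q"
      using Suc.prems by auto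
    then have "\<forall>c. forces (r + d) (G({u, v} := Some c)) Q" using Suc.IH by blast
    then show ?thesis using \<open>u \<noteq> v\<close> \<open>G {u, v} = None\<close> by (simp only: plus_nat.simps forces.simps) blast
  qed
qed

lemma forces_bind:
  "forces r G R \<Longrightarrow> (\<And>H. R H \<Longrightarrow> forces s H Q) \<Longrightarrow> forces (r + s) G Q"
proof (induction r arbitrary: G)
  case 0
  then show ?case by simp
next
  case (Suc r)
  from Suc.prems(1) show ?case
  proof (simp only: forces.simps, elim disjE)
    assume "R G"
    then have "forces s G Q" by (rule Suc.prems(2))
    then have "forces (s + Suc r) G Q" by (rule forces_mono)
    then show ?thesis by (simp add: add.commute)
  next
    assume "\<exists>u v. u \<noteq> v \<and> G {u, v} = None \<and> (\<forall>c. forces r (G({u, v} := Some c)) R)"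
    then obtain u v where "u \<noteq> v" "G {u, v} = None" "\<forall>c. forces r (G({u, v} := Some c)) R"
      by blast
    then have "\<forall>c. forces (r + s) (G({u, v} := Some c)) Q" using Suc.IH Suc.prems(2) by blast
    then show ?thesis using \<open>u \<noteq> v\<close> \<open>G {u, v} = None\<close> by (simp only: plus_nat.simps forces.simps) blast
  qed
qed

lemma probe:
  assumes "u \<noteq> v" "\<And>H c. G \<subseteq>\<^sub>m H \<Longrightarrow> H {u,v} = Some c \<Longrightarrow> forces r H Q"
  shows "forces (Suc r) G Q"
proof (cases "G {u,v}")
  case None
  have "G \<subseteq>\<^sub>m G({u, v} := Some c)" for c
    using None unfolding map_le_def by auto
  then have "\<forall>c. forces r (G({u, v} := Some c)) Q" using assms(2) by auto
  then show ?thesis using None assms(1) by auto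
next
  case (Some c)
  then have "forces r G Q" using assms(2) map_le_refl by blast
  then show ?thesis using forces_mono[of r G Q 1] by simp
qed

lemma step:
  assumes q: "distinct q" "length q = m" "bp G q"
    and P: "has_P G a1 b1 p1" and ba: "b1 \<le> a1" and dj: "set q \<inter> set p1 = {}"
  shows "forces 2 G (\<lambda>H. G \<subseteq>\<^sub>m H \<and> (has_red_C3 H \<or> (\<exists>q'. distinct q' \<and> length q' = m + b1
            \<and> bp H q' \<and> set q' \<subseteq> set q \<union> set p1)))" (is "forces 2 G ?R")
proof (cases "b1 = 0")
  case True
  have "?R G" using q True by auto
  then show ?thesis by (rule forces_triv)
next
  case False
  then have b1pos: "0 < b1" and a1pos: "0 < a1" using ba by auto
  have dp: "distinct p1" and lp: "length p1 = a1 + b1"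
    and ed: "\<And>j. Suc j < a1 + b1 \<Longrightarrow> G {p1 ! j, p1 ! Suc j} = Some (if Suc j = a1 then Red else Blue)"
    using P unfolding has_P_def by auto
  define A where "A = take a1 p1"
  define B where "B = drop a1 p1"
  have lA: "length A = a1" and lB: "length B = b1" using lp by (auto simp: A_def B_def)
  have bpA: "bp G A" unfolding bp_def A_def using ed lp by auto
  have bpB: "bp G B" unfolding bp_def B_def using ed lp by auto
  have dA: "distinct A" and dB: "distinct B" using dp by (auto simp: A_def B_def)
  have sA: "set A \<subseteq> set p1" and sB: "set B \<subseteq> set p1" by (auto simp: A_def B_def dest: in_set_takeD in_set_dropD)
  show ?thesis
  proof (cases "m = 0")
    case True
    have "?R G"
      using True bp_take[OF bpA, of b1] dA lA ba sA
      by (intro conjI disjI2 map_le_refl exI[of _ "take b1 A"]) (auto dest: in_set_takeD)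
    then show ?thesis by (rule forces_triv)
  next
    case False
    define u0 where "u0 = last q"
    define u1 where "u1 = last A"
    define v1 where "v1 = hd B"
    have qne: "q \<noteq> []" using False q by auto
    have Ane: "A \<noteq> []" and Bne: "B \<noteq> []" using lA lB a1pos b1pos by auto
    have u1e: "u1 = p1 ! (a1 - 1)" unfolding u1_def A_def using a1pos lp
      by (subst last_conv_nth) auto
    have v1e: "v1 = p1 ! a1" unfolding v1_def B_def using b1pos lp
      by (simp add: hd_drop_conv_nth)
    have red1: "G {u1, v1} = Some Red" using ed[of "a1 - 1"] a1pos b1pos u1e v1e by simp
    have u0q: "u0 \<in> set q" using qne u0_def by simp
    have u1p: "u1 \<in> set p1" and v1p: "v1 \<in> set p1" using Ane Bne sA sB u1_def v1_def by auto
    have n01: "u0 \<noteq> u1" and n02: "u0 \<noteq> v1" using u0q u1p v1p dj by auto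
    have n12: "u1 \<noteq> v1" using u1e v1e dp lp a1pos b1pos by (simp add: nth_eq_iff_index_eq)
    have dqA: "set q \<inter> set A = {}" and dqB: "set q \<inter> set B = {}" using dj sA sB by auto
    show ?thesis unfolding numeral_2_eq_2
    proof (rule probe[OF n01])
      fix H c assume GH: "G \<subseteq>\<^sub>m H" and c: "H {u0, u1} = Some c"
      show "forces (Suc 0) H ?R"
      proof (cases c)
        case Blue
        define T where "T = take b1 (rev A)"
        have Tne: "T \<noteq> []" using T_def Ane b1pos by simp
        have hT: "hd T = u1" using T_def Ane b1pos u1_def by (simp add: hd_rev)
        have bpT: "bp H T" unfolding T_def by (rule bp_take[OF bp_rev[OF bp_mono[OF bpA GH]]])
        have "bp H (q @ T)"
          using bp_append[OF bp_mono[OF q(3) GH] bpT qne Tne] hT c Blue u0_def by simp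
        moreover have "distinct (q @ T)" using q(1) dA dqA T_def by (auto dest!: in_set_takeD)
        moreover have "length (q @ T) = m + b1" using q(2) T_def lA ba by simp
        moreover have "set (q @ T) \<subseteq> set q \<union> set p1" using T_def sA by (auto dest!: in_set_takeD)
        ultimately have "?R H" using GH by blast
        then show ?thesis by (rule forces_triv)
      next
        case Red
        show ?thesis
        proof (rule probe[OF n02])
          fix H' c' assume HH: "H \<subseteq>\<^sub>m H'" and c': "H' {u0, v1} = Some c'"
          have GH': "G \<subseteq>\<^sub>m H'" using GH HH map_le_trans by blast
          have r01: "H' {u0, u1} = Some Red" using HH c Red unfolding map_le_def by (metis domI)
          have r12: "H' {u1, v1} = Some Red" using GH' red1 unfolding map_le_def by (metis domI)
          show "forces 0 H' ?R"
          proof (cases c')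
            case Blue
            have "bp H' (q @ B)"
              using bp_append[OF bp_mono[OF q(3) GH'] bp_mono[OF bpB GH'] qne Bne] c' Blue u0_def v1_def by simp
            moreover have "distinct (q @ B)" using q(1) dB dqB by auto
            moreover have "length (q @ B) = m + b1" using q(2) lB by simp
            moreover have "set (q @ B) \<subseteq> set q \<union> set p1" using sB by auto
            ultimately have "?R H'" using GH' by blast
            then show ?thesis by simp
          next
            case Red
            have "has_red_C3 H'" unfolding has_red_C3_def
              using n01 n02 n12 r01 r12 c' Red by blast
            then show ?thesis using GH' by simp
          qed
        qed
      qed
    qed
  qed
qed

lemma gen:
  "\<forall>G m q. distinct q \<and> length q = m \<and> bp G q \<and>
     (\<forall>i\<in>{1..k}. b i \<le> a i \<and> has_P G (a i) (b i) (p i) \<and> set q \<inter> set (p i) = {}) \<and>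
     (\<forall>i\<in>{1..k}. \<forall>j\<in>{1..k}. i \<noteq> j \<longrightarrow> set (p i) \<inter> set (p j) = {}) \<longrightarrow>
     forces (2 * k) G (\<lambda>H. has_red_C3 H \<or> has_blue_path H (m + (\<Sum>i=1..k. b i)))"
proof (induction k)
  case 0
  show ?case unfolding has_blue_path_def bp_def by (auto intro: forces_triv)
next
  case (Suc k)
  show ?case
  proof (intro allI impI, elim conjE)
    fix G m q
    assume q: "distinct q" "length q = m" "bp G q"
      and P: "\<forall>i\<in>{1..Suc k}. b i \<le> a i \<and> has_P G (a i) (b i) (p i) \<and> set q \<inter> set (p i) = {}"
      and D: "\<forall>i\<in>{1..Suc k}. \<forall>j\<in>{1..Suc k}. i \<noteq> j \<longrightarrow> set (p i) \<inter> set (p j) = {}"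
    let ?Q = "\<lambda>H. has_red_C3 H \<or> has_blue_path H (m + (\<Sum>i=1..Suc k. b i))"
    have sk: "Suc k \<in> {1..Suc k}" by simp
    have st: "forces 2 G (\<lambda>H. G \<subseteq>\<^sub>m H \<and> (has_red_C3 H \<or> (\<exists>q'. distinct q' \<and> length q' = m + b (Suc k)
            \<and> bp H q' \<and> set q' \<subseteq> set q \<union> set (p (Suc k)))))"
      using step[OF q] P sk by blast
    have "forces (2 + 2 * k) G ?Q"
    proof (rule forces_bind[OF st])
      fix H assume R: "G \<subseteq>\<^sub>m H \<and> (has_red_C3 H \<or> (\<exists>q'. distinct q' \<and> length q' = m + b (Suc k)
            \<and> bp H q' \<and> set q' \<subseteq> set q \<union> set (p (Suc k))))"
      show "forces (2 * k) H ?Q"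
      proof (cases "has_red_C3 H")
        case True then show ?thesis by (simp add: forces_triv)
      next
        case False
        then obtain q' where q': "distinct q'" "length q' = m + b (Suc k)" "bp H q'"
          "set q' \<subseteq> set q \<union> set (p (Suc k))" and GH: "G \<subseteq>\<^sub>m H" using R by blast
        have P': "\<forall>i\<in>{1..k}. b i \<le> a i \<and> has_P H (a i) (b i) (p i) \<and> set q' \<inter> set (p i) = {}"
        proof
          fix i assume i: "i \<in> {1..k}"
          then have i': "i \<in> {1..Suc k}" and ne: "i \<noteq> Suc k" by auto
          have "set (p (Suc k)) \<inter> set (p i) = {}" using D i' sk ne by blast
          then show "b i \<le> a i \<and> has_P H (a i) (b i) (p i) \<and> set q' \<inter> set (p i) = {}"
            using P i' q'(4) hasP_mono[OF _ GH] by blast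
        qed
        have D': "\<forall>i\<in>{1..k}. \<forall>j\<in>{1..k}. i \<noteq> j \<longrightarrow> set (p i) \<inter> set (p j) = {}"
          using D by auto
        have "forces (2 * k) H (\<lambda>H. has_red_C3 H \<or> has_blue_path H (m + b (Suc k) + (\<Sum>i=1..k. b i)))"
          using Suc.IH q' P' D' by blast
        moreover have "m + b (Suc k) + (\<Sum>i=1..k. b i) = m + (\<Sum>i=1..Suc k. b i)" by simp
        ultimately show ?thesis by metis
      qed
    qed
    then show "forces (2 * Suc k) G ?Q" by simp
  qed
qed

theorem lemma2:
  fixes k :: nat and a b :: "nat \<Rightarrow> nat" and G :: cgraph
    and p :: "nat \<Rightarrow> nat list"
  assumes "valid_state G"
    and "\<And>i. i \<le> k \<Longrightarrow> b i \<le> a i"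
    and "\<And>i. i \<le> k \<Longrightarrow> has_P G (a i) (b i) (p i)"
    and "\<And>i j. i \<le> k \<Longrightarrow> j \<le> k \<Longrightarrow> i \<noteq> j \<Longrightarrow> set (p i) \<inter> set (p j) = {}"
  shows "forces (2 * k) G
           (\<lambda>H. has_red_C3 H \<or> has_blue_path H (a 0 + (\<Sum>i=1..k. b i)))"
proof -
  define q where "q = take (a 0) (p 0)"
  have P0: "has_P G (a 0) (b 0) (p 0)" using assms(3) by simp
  then have "distinct q" "length q = a 0" unfolding q_def has_P_def by auto
  moreover have "bp G q" using P0 unfolding q_def has_P_def bp_def by auto
  moreover have "\<forall>i\<in>{1..k}. b i \<le> a i \<and> has_P G (a i) (b i) (p i) \<and> set q \<inter> set (p i) = {}"
  proof
    fix i assume i: "i \<in> {1..k}"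
    have "set (p 0) \<inter> set (p i) = {}" using assms(4)[of 0 i] i by auto
    moreover have "set q \<subseteq> set (p 0)" unfolding q_def by (rule set_take_subset)
    ultimately show "b i \<le> a i \<and> has_P G (a i) (b i) (p i) \<and> set q \<inter> set (p i) = {}"
      using assms(2,3) i by auto
  qed
  moreover have "\<forall>i\<in>{1..k}. \<forall>j\<in>{1..k}. i \<noteq> j \<longrightarrow> set (p i) \<inter> set (p j) = {}"
    using assms(4) by auto
  ultimately show ?thesis using gen[of k b a p] by blast
qed

end
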